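(* Let $n$ be an odd integer with prime factorisation $n=p_{1}^{J_{1}}p_{2}^{J_{2}}\cdots p_{s}^{J_{s}}$, where $s\geq 2$, $p_1,\dots,p_s$ are distinct primes, $J_i\ge 1$, and for every $r\in\{1,\dots,s-1\}$ we have $\prod_{i=1}^{r}p_{i}^{J_{i}}<p_{r+1}$. Let $\mathcal{D}_{S_{1}},\mathcal{D}_{S_{2}}$ be subsets of $\mathcal{D}_{[n]}\setminus\{n\}$. If $\mathrm{Spec}(\mathrm{ICG}(n,\mathcal{D}_{S_{1}}))=\mathrm{Spec}(\mathrm{ICG}(n,\mathcal{D}_{S_{2}}))$, then $\mathcal{D}_{S_{1}}=\mathcal{D}_{S_{2}}$ (equivalently $S_1=S_2$).
   Context: For an integer $n\ge1$, identify $\mathbb{Z}_n$ with $[n]=\{1,\dots,n\}$ ($n$ playing the role of $0$). For a positive divisor $d$ of $n$, $G_n(d)=\{j\in[n]:\gcd(j,n)=d\}$. $\mathcal{D}_{[n]}$ denotes the set of all positive divisors of $n$. For $\mathcal{D}\subseteq\mathcal{D}_{[n]}\setminus\{n\}$, $\mathrm{ICG}(n,\mathcal{D})$ denotes the circulant graph $\mathrm{Cay}(\mathbb{Z}_n,S)$ with connection set $S=\bigcup_{d\in\mathcal{D}}G_n(d)$ (vertex set $\mathbb{Z}_n$, $g\sim h$ iff $h-g\in S$); we write $\mathcal{D}=\mathcal{D}_S$. These are exactly the integral circulant graphs on $\mathbb{Z}_n$. $\mathrm{Spec}$ denotes the multiset of eigenvalues of the adjacency matrix. *)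

theory Defs
  imports "Jordan_Normal_Form.Char_Poly" "HOL-Computational_Algebra.Polynomial"
begin

text \<open>Z_n identified with [n] = {1..n}; residue class of an integer x as an element of [n].\<close>
definition to_bracket :: "nat \<Rightarrow> int \<Rightarrow> nat" where
  "to_bracket n x = (if x mod int n = 0 then n else nat (x mod int n))"

definition Gn :: "nat \<Rightarrow> nat \<Rightarrow> nat set" where
  "Gn n d = {j \<in> {1..n}. gcd j n = d}"

definition conn_set :: "nat \<Rightarrow> nat set \<Rightarrow> nat set" where
  "conn_set n D = (\<Union>d\<in>D. Gn n d)"

definition circ_adj :: "nat \<Rightarrow> nat set \<Rightarrow> complex mat" where
  "circ_adj n S = mat n n (\<lambda>(g, h). if to_bracket n (int h - int g) \<in> S then 1 else 0)"

definition ICG_adj :: "nat \<Rightarrow> nat set \<Rightarrow> complex mat" where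
  "ICG_adj n D = circ_adj n (conn_set n D)"

definition Spec :: "complex mat \<Rightarrow> complex multiset" where
  "Spec A = proots (char_poly A)"

end

theory Submission
  imports Defs "HOL-Number_Theory.Totient"
begin


lemma digit_bound:
  fixes q :: nat and X :: "nat \<Rightarrow> nat"
  assumes q: "prime q" and X: "\<forall>j<J. X j \<le> q - 2"
  shows "(\<Sum>j<J. totient (q^j) * X j) < totient (q^J)"
  using X
proof (induction J)
  case 0 then show ?case by simp
next
  case (Suc J)
  have q2: "q \<ge> 2" using q prime_ge_2_nat by blast
  have "(\<Sum>j<Suc J. totient (q^j) * X j) = (\<Sum>j<J. totient (q^j) * X j) + totient (q^J) * X J" by simp
  also have "\<dots> < totient (q^J) + totient (q^J) * (q - 2)"
    using Suc.IH Suc.prems by (intro add_less_le_mono mult_left_mono) auto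
  also have "\<dots> = totient (q^J) * (q - 1)"
  proof -
    have "q - 1 = Suc (q - 2)" using q2 by linarith
    then show ?thesis by simp
  qed
  also have "\<dots> \<le> q^J * (q - 1)" by (intro mult_right_mono totient_le) auto
  also have "\<dots> = totient (q ^ Suc J)" using totient_prime_power_Suc[OF q] by simp
  finally show ?case .
qed

lemma digits:
  fixes q :: nat and X Y :: "nat \<Rightarrow> nat"
  assumes q: "prime q" and "\<forall>j\<le>J. X j \<le> q - 2" and "\<forall>j\<le>J. Y j \<le> q - 2"
    and "(\<Sum>j\<le>J. totient (q^j) * X j) = (\<Sum>j\<le>J. totient (q^j) * Y j)"
  shows "\<forall>j\<le>J. X j = Y j"
  using assms(2-)
proof (induction J)
  case 0 then show ?case by simp
next
  case (Suc J)
  define A where "A = (\<Sum>j\<le>J. totient (q^j) * X j)"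
  define B where "B = (\<Sum>j\<le>J. totient (q^j) * Y j)"
  define w where "w = totient (q ^ Suc J)"
  have A: "A < w" unfolding A_def w_def using digit_bound[OF q, of "Suc J" X] Suc.prems
    by (simp add: lessThan_Suc_atMost)
  have B: "B < w" unfolding B_def w_def using digit_bound[OF q, of "Suc J" Y] Suc.prems
    by (simp add: lessThan_Suc_atMost)
  have eq: "A + w * X (Suc J) = B + w * Y (Suc J)" using Suc.prems(3) unfolding A_def B_def w_def by simp
  have xy: "X (Suc J) = Y (Suc J)"
  proof (rule ccontr)
    assume "X (Suc J) \<noteq> Y (Suc J)"
    then consider "X (Suc J) < Y (Suc J)" | "Y (Suc J) < X (Suc J)" by linarith
    then show False
    proof cases
      case 1
      then have "w * Suc (X (Suc J)) \<le> w * Y (Suc J)" by (intro mult_left_mono) simp_all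
      then have "w + w * X (Suc J) \<le> w * Y (Suc J)" by (simp only: mult_Suc_right)
      then show False using eq A by linarith
    next
      case 2
      then have "w * Suc (Y (Suc J)) \<le> w * X (Suc J)" by (intro mult_left_mono) simp_all
      then have "w + w * Y (Suc J) \<le> w * X (Suc J)" by (simp only: mult_Suc_right)
      then show False using eq B by linarith
    qed
  qed
  with eq have "A = B" by simp
  have p1: "\<forall>j\<le>J. X j \<le> q - 2" "\<forall>j\<le>J. Y j \<le> q - 2" using Suc.prems(1,2) by auto
  have "\<forall>j\<le>J. X j = Y j"
    by (rule Suc.IH[OF p1 \<open>A = B\<close>[unfolded A_def B_def]])
  show ?case
  proof (intro allI impI)
    fix j assume "j \<le> Suc J"
    then consider "j \<le> J" | "j = Suc J" by linarith
    then show "X j = Y j" using xy \<open>\<forall>j\<le>J. X j = Y j\<close> by cases simp_all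
  qed
qed


definition Psum :: "nat \<Rightarrow> bool" where
  "Psum m \<longleftrightarrow> (\<forall>T1 T2. T1 \<subseteq> {d. d dvd m} \<longrightarrow> T2 \<subseteq> {d. d dvd m} \<longrightarrow>
     (\<Sum>e\<in>T1. totient e) = (\<Sum>e\<in>T2. totient e) \<longrightarrow> T1 = T2)"

lemma Psum_1: "Psum 1"
proof -
  have d1: "{d. d dvd (1::nat)} = {1}" by simp
  have "T \<subseteq> {d. d dvd (1::nat)} \<Longrightarrow> T = {} \<or> T = {1}" for T
    unfolding d1 by (rule iffD1[OF subset_singleton_iff])
  note c = this
  show ?thesis unfolding Psum_def
  proof (intro allI impI)
    fix T1 T2 :: "nat set"
    assume a: "T1 \<subseteq> {d. d dvd 1}" "T2 \<subseteq> {d. d dvd 1}" "(\<Sum>e\<in>T1. totient e) = (\<Sum>e\<in>T2. totient e)"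
    from c[OF a(1)] c[OF a(2)] a(3) show "T1 = T2" by auto
  qed
qed

lemma coprime_dvd_pow:
  fixes q a m :: nat
  assumes "prime q" "\<not> q dvd m" "a dvd m"
  shows "coprime a (q ^ j)"
proof -
  have "\<not> q dvd a" using assms dvd_trans by blast
  then have "coprime q a" using assms(1) by (rule prime_imp_coprime[rotated])
  then have "coprime a q" by (simp add: ac_simps)
  then show ?thesis by simp
qed

lemma pow_mult_inj:
  fixes q a b m :: nat
  assumes q: "prime q" "\<not> q dvd m" and a: "a dvd m" and b: "b dvd m"
    and eq: "a * q ^ i = b * q ^ j"
  shows "i = j \<and> a = b"
proof -
  have q0: "q > 0" using q prime_gt_0_nat by blast
  have nqa: "\<not> q dvd a" "\<not> q dvd b" using q a b dvd_trans by blast+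
  have "\<not> i < j" if "i < j" "a * q ^ i = b * q ^ j" "\<not> q dvd a" for i j a b
  proof
    have "q ^ j = q ^ i * q ^ (j - i)" using that by (simp add: power_add[symmetric])
    then have "a * q ^ i = (b * q ^ (j - i)) * q ^ i" using that by (simp add: ac_simps)
    then have "a = b * q ^ (j - i)" using q0 by simp
    moreover have "q dvd q ^ (j - i)" using that by (simp add: dvd_power)
    ultimately show False using that by (metis dvd_mult)
  qed
  then have "i = j" using eq nqa by (metis linorder_neqE_nat)
  then show ?thesis using eq q0 by simp
qed

lemma dvd_decomp:
  fixes q e m :: nat
  assumes q: "prime q" and e: "e dvd m * q ^ J"
  shows "\<exists>j\<le>J. \<exists>a. a dvd m \<and> e = a * q ^ j"
proof -
  obtain a c where "e = a * c" "a dvd m" "c dvd q ^ J" using division_decomp[OF e] by blast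
  moreover obtain j where "j \<le> J" "c = q ^ j" using divides_primepow_nat[OF q] \<open>c dvd q ^ J\<close> by blast
  ultimately show ?thesis by blast
qed


lemma Psum_step:
  fixes m q J :: nat
  assumes m: "m > 0" and q: "prime q" and nd: "\<not> q dvd m" and mq: "m + 2 \<le> q" and P: "Psum m"
  shows "Psum (m * q ^ J)"
proof -
  define f :: "nat \<times> nat \<Rightarrow> nat" where "f = (\<lambda>(j, a). a * q ^ j)"
  define Dm where "Dm = {a. a dvd m}"
  define U where "U = (\<lambda>T j. {a. a dvd m \<and> a * q ^ j \<in> T})"
  have finDm: "finite Dm" unfolding Dm_def using m by simp
  have inj: "inj_on f (Sigma {..J} (\<lambda>_. Dm))"
  proof (rule inj_onI)
    fix x y assume x: "x \<in> Sigma {..J} (\<lambda>_. Dm)" and y: "y \<in> Sigma {..J} (\<lambda>_. Dm)" and e: "f x = f y"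
    obtain i a where xa: "x = (i, a)" by (cases x)
    obtain j b where yb: "y = (j, b)" by (cases y)
    have "a dvd m" "b dvd m" using x y xa yb unfolding Dm_def by auto
    moreover have "a * q ^ i = b * q ^ j" using e xa yb unfolding f_def by simp
    ultimately have "i = j \<and> a = b" by (rule pow_mult_inj[OF q nd])
    then show "x = y" using xa yb by simp
  qed
  have UDm: "U T j \<subseteq> Dm" for T j unfolding U_def Dm_def by auto
  have img: "T = f ` (Sigma {..J} (U T))" if T: "T \<subseteq> {d. d dvd m * q ^ J}" for T
  proof
    show "T \<subseteq> f ` (Sigma {..J} (U T))"
    proof
      fix e assume "e \<in> T"
      then obtain j a where "j \<le> J" "a dvd m" "e = a * q ^ j" using T dvd_decomp[OF q] by blast
      then show "e \<in> f ` (Sigma {..J} (U T))" unfolding f_def U_def using \<open>e \<in> T\<close>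
        by (auto intro!: image_eqI[where x = "(j, a)"])
    qed
    show "f ` (Sigma {..J} (U T)) \<subseteq> T" unfolding f_def U_def by auto
  qed
  have sumeq: "(\<Sum>e\<in>T. totient e) = (\<Sum>j\<le>J. totient (q ^ j) * (\<Sum>a\<in>U T j. totient a))"
    if T: "T \<subseteq> {d. d dvd m * q ^ J}" for T
  proof -
    have sub: "Sigma {..J} (U T) \<subseteq> Sigma {..J} (\<lambda>_. Dm)" using UDm by auto
    have inj': "inj_on f (Sigma {..J} (U T))" using inj_on_subset[OF inj sub] .
    have "(\<Sum>e\<in>T. totient e) = (\<Sum>x\<in>Sigma {..J} (U T). totient (f x))"
      by (subst img[OF T]) (simp add: sum.reindex[OF inj'])
    also have "\<dots> = (\<Sum>j\<le>J. \<Sum>a\<in>U T j. totient (a * q ^ j))"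
    proof -
      have "(\<Sum>j\<le>J. \<Sum>a\<in>U T j. totient (a * q ^ j)) = (\<Sum>(j,a)\<in>Sigma {..J} (U T). totient (a * q ^ j))"
        by (rule sum.Sigma) (auto intro: finite_subset[OF UDm finDm])
      then show ?thesis by (simp add: f_def case_prod_unfold)
    qed
    also have "\<dots> = (\<Sum>j\<le>J. \<Sum>a\<in>U T j. totient (q ^ j) * totient a)"
    proof (intro sum.cong refl)
      fix j a assume "a \<in> U T j"
      then have "a dvd m" unfolding U_def by auto
      then have "coprime a (q ^ j)" using coprime_dvd_pow[OF q nd] by blast
      then show "totient (a * q ^ j) = totient (q ^ j) * totient a"
        by (simp add: totient_mult_coprime)
    qed
    also have "\<dots> = (\<Sum>j\<le>J. totient (q ^ j) * (\<Sum>a\<in>U T j. totient a))"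
      by (simp add: sum_distrib_left)
    finally show ?thesis .
  qed
  have bnd: "(\<Sum>a\<in>U T j. totient a) \<le> q - 2" for T j
  proof -
    have "(\<Sum>a\<in>U T j. totient a) \<le> (\<Sum>a\<in>Dm. totient a)"
      by (rule sum_mono2[OF finDm UDm]) simp
    also have "\<dots> = m" unfolding Dm_def by (rule totient_divisor_sum)
    finally show ?thesis using mq by linarith
  qed
  show ?thesis unfolding Psum_def
  proof (intro allI impI)
    fix T1 T2 :: "nat set"
    assume T1: "T1 \<subseteq> {d. d dvd m * q ^ J}" and T2: "T2 \<subseteq> {d. d dvd m * q ^ J}"
      and eq: "(\<Sum>e\<in>T1. totient e) = (\<Sum>e\<in>T2. totient e)"
    have "\<forall>j\<le>J. (\<Sum>a\<in>U T1 j. totient a) = (\<Sum>a\<in>U T2 j. totient a)"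
      by (rule digits[OF q]) (use bnd eq sumeq[OF T1] sumeq[OF T2] in auto)
    then have "\<forall>j\<le>J. U T1 j = U T2 j"
      using P UDm unfolding Psum_def Dm_def by blast
    then have "Sigma {..J} (U T1) = Sigma {..J} (U T2)" by auto
    then show "T1 = T2" using img[OF T1] img[OF T2] by simp
  qed
qed



lemma to_bracket_range: "n > 0 \<Longrightarrow> to_bracket n x \<in> {1..n}"
  unfolding to_bracket_def
proof (cases "x mod int n = 0")
  case False
  assume n: "n > 0"
  have "0 \<le> x mod int n" "x mod int n < int n" using n by auto
  with False show "(if x mod int n = 0 then n else nat (x mod int n)) \<in> {1..n}" by auto
qed auto

lemma to_bracket_mod:
  assumes n: "n > 0" and e: "to_bracket n x = to_bracket n y"
  shows "x mod int n = y mod int n"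
proof -
  have b: "0 \<le> z mod int n" "z mod int n < int n" for z using n by auto
  define a where "a = x mod int n"
  define c where "c = y mod int n"
  have ab: "0 \<le> a" "a < int n" "0 \<le> c" "c < int n" unfolding a_def c_def using b by auto
  have "(if a = 0 then n else nat a) = (if c = 0 then n else nat c)"
    using e unfolding to_bracket_def a_def c_def .
  then have "a = c" using ab by (auto split: if_splits)
  then show ?thesis unfolding a_def c_def .
qed

lemma to_bracket_inj:
  assumes n: "n > 0"
  shows "inj_on (\<lambda>h. to_bracket n (int h - int g)) {0..<n}"
proof (rule inj_onI)
  fix h h' assume h: "h \<in> {0..<n}" and h': "h' \<in> {0..<n}"
    and e: "to_bracket n (int h - int g) = to_bracket n (int h' - int g)"
  have "(int h - int g) mod int n = (int h' - int g) mod int n" using to_bracket_mod[OF n e] .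
  then have "((int h - int g) + int g) mod int n = ((int h' - int g) + int g) mod int n"
    by (rule mod_add_cong) (rule refl)
  then have "int h mod int n = int h' mod int n" by simp
  then show "h = h'" using h h' by simp
qed

lemma row_count:
  assumes n: "n > 0" and S: "S \<subseteq> {1..n}"
  shows "card {h \<in> {0..<n}. to_bracket n (int h - int g) \<in> S} = card S"
proof -
  define \<phi> where "\<phi> = (\<lambda>h. to_bracket n (int h - int g))"
  have inj: "inj_on \<phi> {0..<n}" unfolding \<phi>_def by (rule to_bracket_inj[OF n])
  have sub: "\<phi> ` {0..<n} \<subseteq> {1..n}" unfolding \<phi>_def using to_bracket_range[OF n] by auto
  have "card (\<phi> ` {0..<n}) = card {1..n}" using card_image[OF inj] by simp
  then have im: "\<phi> ` {0..<n} = {1..n}" using card_subset_eq[OF _ sub] by simp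
  have "\<phi> ` {h \<in> {0..<n}. \<phi> h \<in> S} = \<phi> ` {0..<n} \<inter> S" by blast
  also have "\<dots> = S" using im S by blast
  finally have "\<phi> ` {h \<in> {0..<n}. \<phi> h \<in> S} = S" .
  moreover have "card (\<phi> ` {h \<in> {0..<n}. \<phi> h \<in> S}) = card {h \<in> {0..<n}. \<phi> h \<in> S}"
    by (rule card_image) (rule inj_on_subset[OF inj], auto)
  ultimately show ?thesis unfolding \<phi>_def by simp
qed

lemma sum_indicator:
  fixes c :: "'a :: comm_semiring_1"
  assumes "finite A"
  shows "(\<Sum>j\<in>A. if P j then c else 0) = of_nat (card {j\<in>A. P j}) * c"
proof -
  have "(\<Sum>j\<in>A. if P j then c else 0) = (\<Sum>j\<in>{j\<in>A. P j}. c)"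
    using sum.inter_filter[OF assms, of "\<lambda>_. c" P] by simp
  also have "\<dots> = of_nat (card {j\<in>A. P j}) * c" by simp
  finally show ?thesis .
qed

lemma circ_rowsum:
  assumes n: "n > 0" and S: "S \<subseteq> {1..n}" and i: "i < n"
  shows "(\<Sum>j\<in>{0..<n}. if to_bracket n (int j - int i) \<in> S then c else (0::'a::comm_semiring_1))
     = of_nat (card S) * c"
  using sum_indicator[of "{0..<n}" "\<lambda>j. to_bracket n (int j - int i) \<in> S" c] row_count[OF n S, of i]
  by simp

lemma circ_carrier: "circ_adj n S \<in> carrier_mat n n"
  unfolding circ_adj_def by simp

lemma circ_eigen:
  assumes n: "n > 0" and S: "S \<subseteq> {1..n}"
  shows "eigenvalue (circ_adj n S) (of_nat (card S))"
proof -
  define v :: "complex vec" where "v = vec n (\<lambda>_. 1)"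
  have "eigenvector (circ_adj n S) v (of_nat (card S))"
    unfolding eigenvector_def
  proof (intro conjI)
    show "v \<in> carrier_vec (dim_row (circ_adj n S))" unfolding v_def circ_adj_def by simp
    show "v \<noteq> 0\<^sub>v (dim_row (circ_adj n S))"
    proof
      assume "v = 0\<^sub>v (dim_row (circ_adj n S))"
      then have "v $ 0 = 0\<^sub>v n $ 0" unfolding circ_adj_def by simp
      then show False unfolding v_def using n by simp
    qed
    show "circ_adj n S *\<^sub>v v = of_nat (card S) \<cdot>\<^sub>v v"
    proof (rule eq_vecI)
      fix i assume "i < dim_vec (of_nat (card S) \<cdot>\<^sub>v v)"
      then have i: "i < n" unfolding v_def by simp
      have "(circ_adj n S *\<^sub>v v) $ i = (\<Sum>j\<in>{0..<n}. (if to_bracket n (int j - int i) \<in> S then 1 else 0) * (1::complex))"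
        using i unfolding circ_adj_def v_def by (simp add: scalar_prod_def)
      also have "\<dots> = of_nat (card S)" using circ_rowsum[OF n S i, of "1::complex"] by simp
      finally show "(circ_adj n S *\<^sub>v v) $ i = (of_nat (card S) \<cdot>\<^sub>v v) $ i"
        using i unfolding v_def by simp
    qed (simp add: circ_adj_def v_def)
  qed
  then show ?thesis unfolding eigenvalue_def by blast
qed

lemma circ_bound:
  assumes n: "n > 0" and S: "S \<subseteq> {1..n}" and ev: "eigenvalue (circ_adj n S) l"
  shows "cmod l \<le> card S"
proof -
  obtain v where ev: "eigenvector (circ_adj n S) v l" using ev unfolding eigenvalue_def by blast
  have dr: "dim_row (circ_adj n S) = n" unfolding circ_adj_def by simp
  have v: "v \<in> carrier_vec n" "v \<noteq> 0\<^sub>v n" "circ_adj n S *\<^sub>v v = l \<cdot>\<^sub>v v"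
    using ev unfolding eigenvector_def dr by auto
  define M where "M = Max ((\<lambda>j. cmod (v $ j)) ` {0..<n})"
  have fin: "finite ((\<lambda>j. cmod (v $ j)) ` {0..<n})" by simp
  have ne: "(\<lambda>j. cmod (v $ j)) ` {0..<n} \<noteq> {}" using n by simp
  obtain i where i: "i < n" "cmod (v $ i) = M" using Max_in[OF fin ne] unfolding M_def by auto
  have Mge: "cmod (v $ j) \<le> M" if "j < n" for j unfolding M_def using that by (intro Max_ge[OF fin]) auto
  have Mpos: "M > 0"
  proof (rule ccontr)
    assume M0: "\<not> M > 0"
    have "v $ j = 0" if "j < n" for j
    proof -
      have "cmod (v $ j) \<le> 0" using Mge[OF that] M0 by linarith
      then show ?thesis by simp
    qed
    then have "v = 0\<^sub>v n" using v(1) by (intro eq_vecI) auto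
    then show False using v(2) by simp
  qed
  have "l * v $ i = (circ_adj n S *\<^sub>v v) $ i" using v(3) v(1) i by simp
  also have "\<dots> = (\<Sum>j\<in>{0..<n}. (if to_bracket n (int j - int i) \<in> S then 1 else 0) * v $ j)"
    using i v(1) unfolding circ_adj_def by (simp add: scalar_prod_def)
  finally have eq: "l * v $ i = \<dots>" .
  have "cmod l * M = cmod (l * v $ i)" using i by (simp add: norm_mult)
  also have "\<dots> \<le> (\<Sum>j\<in>{0..<n}. cmod ((if to_bracket n (int j - int i) \<in> S then 1 else 0) * v $ j))"
    unfolding eq by (rule norm_sum)
  also have "\<dots> \<le> (\<Sum>j\<in>{0..<n}. if to_bracket n (int j - int i) \<in> S then M else 0)"
    by (rule sum_mono) (use Mge in auto)
  also have "\<dots> = of_nat (card S) * M" by (rule circ_rowsum[OF n S i(1)])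
  finally have "cmod l * M \<le> real (card S) * M" by simp
  then show ?thesis using Mpos by simp
qed

lemma Spec_eigen:
  assumes "A \<in> carrier_mat n n"
  shows "x \<in># Spec A \<longleftrightarrow> eigenvalue A x"
proof -
  have "coeff (char_poly A) n = 1" using degree_monic_char_poly[OF assms] by simp
  then have "char_poly A \<noteq> 0" by auto
  then show ?thesis unfolding Spec_def using eigenvalue_root_char_poly[OF assms] by simp
qed

lemma card_iso:
  assumes n: "n > 0" and S1: "S1 \<subseteq> {1..n}" and S2: "S2 \<subseteq> {1..n}"
    and sp: "Spec (circ_adj n S1) = Spec (circ_adj n S2)"
  shows "card S1 = card S2"
proof -
  have "card S1 \<le> card S2" if S1: "S1 \<subseteq> {1..n}" and S2: "S2 \<subseteq> {1..n}"
    and sp: "Spec (circ_adj n S1) = Spec (circ_adj n S2)" for S1 S2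
  proof -
    have "of_nat (card S1) \<in># Spec (circ_adj n S1)"
      using circ_eigen[OF n S1] Spec_eigen[OF circ_carrier] by blast
    then have "eigenvalue (circ_adj n S2) (of_nat (card S1))"
      using sp Spec_eigen[OF circ_carrier] by metis
    from circ_bound[OF n S2 this] show ?thesis by simp
  qed
  from this[OF S1 S2 sp] this[OF S2 S1 sp[symmetric]] show ?thesis by simp
qed


lemma card_Gn:
  assumes n: "n > 0" and d: "d dvd n"
  shows "card (Gn n d) = totient (n div d)"
proof -
  have "Gn n d = {k\<in>{0<..n}. gcd k n = d}" unfolding Gn_def by auto
  then show ?thesis using card_gcd_eq_totient[OF n d] by simp
qed

lemma card_conn:
  assumes n: "n > 0" and D: "D \<subseteq> {d. d dvd n}"
  shows "card (conn_set n D) = (\<Sum>d\<in>D. totient (n div d))"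
proof -
  have finD: "finite D" using finite_subset[OF D] n by simp
  have "card (conn_set n D) = (\<Sum>d\<in>D. card (Gn n d))"
    unfolding conn_set_def
    by (rule card_UN_disjoint[OF finD]) (auto simp: Gn_def)
  also have "\<dots> = (\<Sum>d\<in>D. totient (n div d))"
    by (rule sum.cong) (use D card_Gn[OF n] in auto)
  finally show ?thesis .
qed

lemma conn_sub: "conn_set n D \<subseteq> {1..n}"
  unfolding conn_set_def Gn_def by auto

lemma div_inj:
  assumes n: "(n::nat) > 0"
  shows "inj_on (\<lambda>d. n div d) {d. d dvd n}"
proof (rule inj_onI)
  fix d d' assume d: "d \<in> {d. d dvd n}" and d': "d' \<in> {d. d dvd n}" and e: "n div d = n div d'"
  have nd: "n = d * (n div d)" and "n = d' * (n div d')" using d d' by auto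
  then have "d * (n div d) = d' * (n div d)" using e by simp
  moreover have "n div d > 0" using nd n by (metis mult_0_right neq0_conv)
  ultimately show "d = d'" by simp
qed

lemma div_img_sub:
  assumes D: "D \<subseteq> {d. d dvd (n::nat)}"
  shows "(\<lambda>d. n div d) ` D \<subseteq> {d. d dvd n}"
proof
  fix e assume "e \<in> (\<lambda>d. n div d) ` D"
  then obtain d where "d \<in> D" "e = n div d" by blast
  then have "n = d * e" using D by auto
  then show "e \<in> {d. d dvd n}" by (metis dvd_triv_right mem_Collect_eq)
qed




lemma Psum_n:
  fixes n s :: nat and p J :: "nat \<Rightarrow> nat"
  assumes odd: "odd n"
    and nprod: "n = (\<Prod>i=1..s. p i ^ J i)"
    and pr: "\<forall>i\<in>{1..s}. prime (p i)"
    and inj: "inj_on p {1..s}"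
    and J1: "\<forall>i\<in>{1..s}. J i \<ge> 1"
    and gr: "\<forall>r\<in>{1..s-1}. (\<Prod>i=1..r. p i ^ J i) < p (r + 1)"
  shows "Psum n"
proof -
  have "r \<le> s \<Longrightarrow> Psum (\<Prod>i=1..r. p i ^ J i)" for r
  proof (induction r)
    case 0 then show ?case using Psum_1 by simp
  next
    case (Suc r)
    define N where "N = (\<Prod>i=1..r. p i ^ J i)"
    define q where "q = p (Suc r)"
    have rs: "r < s" using Suc.prems by simp
    have q: "prime q" using pr Suc.prems unfolding q_def by auto
    have prod: "(\<Prod>i=1..Suc r. p i ^ J i) = N * q ^ J (Suc r)"
      unfolding N_def q_def by (simp add: prod.nat_ivl_Suc' mult.commute)
    have Ndvd: "N dvd n" unfolding N_def nprod by (rule prod_dvd_prod_subset) (use rs in auto)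
    have "q ^ J (Suc r) dvd n" unfolding nprod q_def by (rule dvd_prodI) (use rs in auto)
    moreover have "q dvd q ^ J (Suc r)"
    proof -
      have "J (Suc r) \<ge> 1" using J1 rs by auto
      then show ?thesis by (simp add: dvd_power)
    qed
    ultimately have qdvd: "q dvd n" by (rule dvd_trans[rotated])
    have oddN: "odd N" using Ndvd odd dvd_trans by blast
    have oddq: "odd q" using qdvd odd dvd_trans by blast
    have N0: "N > 0" unfolding N_def
    proof (intro prod_pos)
      fix i assume "i \<in> {1..r}"
      then have "prime (p i)" using pr rs by auto
      then have "p i > 0" by (rule prime_gt_0_nat)
      then show "0 < p i ^ J i" by simp
    qed
    have nd: "\<not> q dvd N"
    proof
      assume "q dvd N"
      moreover have "q dvd N \<longleftrightarrow> (\<exists>i\<in>{1..r}. q dvd p i ^ J i)"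
        unfolding N_def by (rule prime_dvd_prod_iff[OF _ q]) simp
      ultimately obtain i where i: "i \<in> {1..r}" "q dvd p i ^ J i" by blast
      have pi: "prime (p i)" using pr i(1) rs by simp
      have "q dvd p i" using i(2) by (rule prime_dvd_power[OF q])
      then have "q = p i" by (rule primes_dvd_imp_eq[OF q pi])
      then have "p (Suc r) = p i" unfolding q_def .
      moreover have "Suc r \<in> {1..s}" "i \<in> {1..s}" using i(1) rs by auto
      ultimately have "Suc r = i" using inj_onD[OF inj] by blast
      then show False using i(1) by simp
    qed
    have lt: "N < q"
    proof (cases "r = 0")
      case True
      then show ?thesis unfolding N_def using prime_gt_1_nat[OF q] by simp
    next
      case False
      then have "r \<in> {1..s-1}" using rs by auto
      then show ?thesis using gr unfolding N_def q_def by auto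
    qed
    have "N + 2 \<le> q" using lt oddN oddq by presburger
    have "Psum N" unfolding N_def using Suc.IH rs by simp
    from Psum_step[OF N0 q nd \<open>N + 2 \<le> q\<close> this] show ?case unfolding prod .
  qed
  from this[of s] show ?thesis unfolding nprod by simp
qed

theorem theorem1p4:
  fixes n s :: nat and p J :: "nat \<Rightarrow> nat" and D1 D2 :: "nat set"
  assumes "odd n"
    and "s \<ge> 2"
    and "n = (\<Prod>i=1..s. p i ^ J i)"
    and "\<forall>i\<in>{1..s}. prime (p i)"
    and "inj_on p {1..s}"
    and "\<forall>i\<in>{1..s}. J i \<ge> 1"
    and "\<forall>r\<in>{1..s-1}. (\<Prod>i=1..r. p i ^ J i) < p (r + 1)"
    and "D1 \<subseteq> {d. d dvd n} - {n}"
    and "D2 \<subseteq> {d. d dvd n} - {n}"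
    and "Spec (ICG_adj n D1) = Spec (ICG_adj n D2)"
  shows "D1 = D2"
proof -
  have P: "Psum n" by (rule Psum_n[OF assms(1,3-7)])
  have n: "n > 0" using assms(1) by (cases n) auto
  have D1: "D1 \<subseteq> {d. d dvd n}" and D2: "D2 \<subseteq> {d. d dvd n}" using assms(8,9) by auto
  have "card (conn_set n D1) = card (conn_set n D2)"
    by (rule card_iso[OF n conn_sub conn_sub]) (use assms(10) in \<open>simp add: ICG_adj_def\<close>)
  then have eq: "(\<Sum>d\<in>D1. totient (n div d)) = (\<Sum>d\<in>D2. totient (n div d))"
    using card_conn[OF n D1] card_conn[OF n D2] by simp
  have re: "(\<Sum>d\<in>D. totient (n div d)) = (\<Sum>e\<in>(\<lambda>d. n div d) ` D. totient e)"
    if D: "D \<subseteq> {d. d dvd n}" for D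
    using sum.reindex[OF inj_on_subset[OF div_inj[OF n] D], of totient] by (simp add: o_def)
  have "(\<lambda>d. n div d) ` D1 = (\<lambda>d. n div d) ` D2"
    using P div_img_sub[OF D1] div_img_sub[OF D2] eq re[OF D1] re[OF D2] unfolding Psum_def by metis
  then show ?thesis using inj_on_image_eq_iff[OF div_inj[OF n] D1 D2] by simp
qed


end
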